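(* In every state $\mathbf{x}$ of the common-chunk-protocol Markov process (with $k\ge 2$ chunks and any $\lambda>0$) in which $S\ge 12$, the total download rate satisfies \[ r \;\ge\; \min_{1\le i\le k} \frac{S_i}{2k^3}. \]
   Context: Model: Fix an integer $k\ge 2$ (number of chunks of a file) and $\lambda>0$. There is always exactly one seed holding all $k$ chunks. Non-seed peers arrive according to a Poisson process of rate $\lambda$, each arriving with no chunks; each non-seed peer holds a subset (its profile) of $\{1,\dots,k\}$ and leaves the system immediately once it holds all $k$ chunks. The state $\mathbf{x}$ of the continuous-time Markov process is the number of non-seed peers with each profile. $S$ denotes the total number of peers present, including the seed. Each non-seed peer has an independent rate-1 Poisson clock; at each tick it draws a sample of peers independently and uniformly at random with replacement from the current $S$ peers (seed and itself included) and may instantaneously download at most one chunk that it lacks and that is held by some sampled peer (such a chunk is a "match"). Counting draws with multiplicity, a chunk is "rare" in a sample of 3 draws if exactly one of the 3 draws holds it. Common chunk protocol: (i) a peer with no chunks draws 3 peers and downloads a chunk chosen uniformly among the rare matches, if there is any, otherwise nothing; (ii) a peer holding at least 1 and at most $k-2$ chunks draws 1 peer and downloads a uniformly chosen match, if any, otherwise nothing; (iii) a peer holding exactly $k-1$ chunks draws 3 peers and downloads its missing chunk only if that chunk is held by some draw and every chunk it holds is held by at least 2 of the 3 draws; otherwise nothing. Notation: $S_i$ ($1\le i\le k$) is the number of peers, including the seed, holding chunk $i$. $r=r(\mathbf{x})$ is the total rate of download events in state $\mathbf{x}$, i.e. the sum over all non-seed peers of the probability that a clock tick of that peer results in a download.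 *)

theory Defs
  imports Complex_Main
begin

text \<open>A state assigns to every
profile the number of non-seed peers holding exactly that profile; non-seed peers
never hold the full set (they leave immediately).\<close>

definition profiles :: "nat \<Rightarrow> nat set set" where
  "profiles k = Pow {1..k}"

definition valid_state :: "nat \<Rightarrow> (nat set \<Rightarrow> nat) \<Rightarrow> bool" where
  "valid_state k x \<longleftrightarrow> (\<forall>C. x C > 0 \<longrightarrow> C \<subseteq> {1..k} \<and> C \<noteq> {1..k})"

text \<open>Number of peers (seed included) with profile C; the seed has profile {1..k}.\<close>
definition pop :: "nat \<Rightarrow> (nat set \<Rightarrow> nat) \<Rightarrow> nat set \<Rightarrow> nat" where
  "pop k x C = x C + (if C = {1..k} then 1 else 0)"

definition total_peers :: "nat \<Rightarrow> (nat set \<Rightarrow> nat) \<Rightarrow> nat" where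
  "total_peers k x = (\<Sum>C\<in>profiles k. pop k x C)"

definition holders :: "nat \<Rightarrow> (nat set \<Rightarrow> nat) \<Rightarrow> nat \<Rightarrow> nat" where
  "holders k x i = (\<Sum>C\<in>{C\<in>profiles k. i \<in> C}. pop k x C)"

text \<open>Probability that one uniform draw (from the S peers) satisfies Q.\<close>
definition prob1 :: "nat \<Rightarrow> (nat set \<Rightarrow> nat) \<Rightarrow> (nat set \<Rightarrow> bool) \<Rightarrow> real" where
  "prob1 k x Q = (\<Sum>A\<in>profiles k. real (pop k x A) * (if Q A then 1 else 0))
                  / real (total_peers k x)"

text \<open>Probability that three independent uniform draws with replacement satisfy Q.\<close>
definition prob3 :: "nat \<Rightarrow> (nat set \<Rightarrow> nat) \<Rightarrow> (nat set \<Rightarrow> nat set \<Rightarrow> nat set \<Rightarrow> bool) \<Rightarrow> real" where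
  "prob3 k x Q = (\<Sum>A\<in>profiles k. \<Sum>B\<in>profiles k. \<Sum>D\<in>profiles k.
      real (pop k x A) * real (pop k x B) * real (pop k x D) * (if Q A B D then 1 else 0))
      / real (total_peers k x) ^ 3"

definition cnt3 :: "nat \<Rightarrow> nat set \<Rightarrow> nat set \<Rightarrow> nat set \<Rightarrow> nat" where
  "cnt3 i A B D = (if i \<in> A then 1 else 0) + (if i \<in> B then 1 else 0) + (if i \<in> D then 1 else 0)"

text \<open>Probability that a clock tick of a peer with profile C leads to a download
under the common chunk protocol.\<close>
definition dl_prob :: "nat \<Rightarrow> (nat set \<Rightarrow> nat) \<Rightarrow> nat set \<Rightarrow> real" where
  "dl_prob k x C =
    (if C = {} then prob3 k x (\<lambda>A B D. \<exists>i\<in>{1..k}. cnt3 i A B D = 1)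
     else if card C \<le> k - 2 then prob1 k x (\<lambda>A. \<not> A \<subseteq> C)
     else if card C = k - 1 then
       prob3 k x (\<lambda>A B D. (\<exists>j\<in>{1..k} - C. cnt3 j A B D \<ge> 1) \<and> (\<forall>i\<in>C. cnt3 i A B D \<ge> 2))
     else 0)"

definition dl_rate :: "nat \<Rightarrow> (nat set \<Rightarrow> nat) \<Rightarrow> real" where
  "dl_rate k x = (\<Sum>C\<in>profiles k. real (x C) * dl_prob k x C)"

end

theory Submission
  imports Defs
begin

lemma fin_prof[simp]: "finite (profiles k)" by (simp add: profiles_def)

definition wt :: "nat \<Rightarrow> (nat set \<Rightarrow> nat) \<Rightarrow> (nat set \<Rightarrow> real) \<Rightarrow> real" where
  "wt k x f = (\<Sum>A\<in>profiles k. real (pop k x A) * f A)"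

lemma fact3:
  "(\<Sum>A\<in>P. \<Sum>B\<in>P. \<Sum>D\<in>P. (a A::real) * b B * c D * (f A * g B * h D))
   = (\<Sum>A\<in>P. a A * f A) * (\<Sum>B\<in>P. b B * g B) * (\<Sum>D\<in>P. c D * h D)"
proof -
  have "(\<Sum>A\<in>P. a A * f A) * (\<Sum>B\<in>P. b B * g B) * (\<Sum>D\<in>P. c D * h D)
     = (\<Sum>A\<in>P. a A * f A * ((\<Sum>B\<in>P. b B * g B) * (\<Sum>D\<in>P. c D * h D)))"
    by (simp add: sum_distrib_right mult.assoc)
  also have "\<dots> = (\<Sum>A\<in>P. a A * f A * (\<Sum>B\<in>P. b B * g B * (\<Sum>D\<in>P. c D * h D)))"
    by (simp only: sum_distrib_right)
  also have "\<dots> = (\<Sum>A\<in>P. \<Sum>B\<in>P. a A * f A * (b B * g B) * (\<Sum>D\<in>P. c D * h D))"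
    by (simp only: sum_distrib_left mult.assoc)
  also have "\<dots> = (\<Sum>A\<in>P. \<Sum>B\<in>P. \<Sum>D\<in>P. a A * f A * (b B * g B) * (c D * h D))"
    by (intro sum.cong refl) (simp add: sum_distrib_left)
  finally show ?thesis by (simp add: mult_ac)
qed

lemma prob3_lb:
  assumes "\<And>A B D. A \<in> profiles k \<Longrightarrow> B \<in> profiles k \<Longrightarrow> D \<in> profiles k \<Longrightarrow>
     F A B D \<le> (if Q A B D then 1 else 0)"
  shows "prob3 k x Q \<ge> (\<Sum>A\<in>profiles k. \<Sum>B\<in>profiles k. \<Sum>D\<in>profiles k.
      real (pop k x A) * real (pop k x B) * real (pop k x D) * F A B D) / real (total_peers k x) ^ 3"
  unfolding prob3_def
  by (intro divide_right_mono sum_mono mult_left_mono assms) auto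

lemma prob1_lb:
  assumes "\<And>A. A \<in> profiles k \<Longrightarrow> f A \<le> (if Q A then 1 else 0)"
  shows "prob1 k x Q \<ge> wt k x f / real (total_peers k x)"
  unfolding prob1_def wt_def
  by (intro divide_right_mono sum_mono mult_left_mono assms) auto

lemma prob1_nn: "prob1 k x Q \<ge> 0"
  unfolding prob1_def by (intro divide_nonneg_nonneg sum_nonneg) auto

lemma prob3_nn: "prob3 k x Q \<ge> 0"
  unfolding prob3_def by (intro divide_nonneg_nonneg sum_nonneg) auto

lemma dl_nn: "dl_prob k x C \<ge> 0"
  unfolding dl_prob_def using prob1_nn prob3_nn by auto

lemma wt_in: "wt k x (\<lambda>A. of_bool (i \<in> A)) = real (holders k x i)"
  unfolding wt_def holders_def of_nat_sum
  by (simp add: sum.inter_filter of_bool_def if_distrib cong: if_cong)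

lemma wt_all: "wt k x (\<lambda>A. 1) = real (total_peers k x)"
  unfolding wt_def total_peers_def by simp

lemma wt_out: "wt k x (\<lambda>A. of_bool (i \<notin> A)) = real (total_peers k x) - real (holders k x i)"
proof -
  have "wt k x (\<lambda>A. of_bool (i \<in> A)) + wt k x (\<lambda>A. of_bool (i \<notin> A)) = wt k x (\<lambda>A. 1)"
    unfolding wt_def sum.distrib[symmetric] by (rule sum.cong) auto
  then show ?thesis using wt_in wt_all by (metis add_diff_cancel_left')
qed

lemma total_eq: "real (total_peers k x) = (\<Sum>C\<in>profiles k. real (x C)) + 1"
proof -
  have "{1..k} \<in> profiles k" by (simp add: profiles_def)
  then show ?thesis
  unfolding total_peers_def pop_def by (simp add: sum.distrib)
qed

lemma sum3_split:
  "(\<Sum>A\<in>P. \<Sum>B\<in>P. \<Sum>D\<in>P. (w A B D::real) * (F1 A B D + F2 A B D + F3 A B D))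
   = (\<Sum>A\<in>P. \<Sum>B\<in>P. \<Sum>D\<in>P. w A B D * F1 A B D)
   + (\<Sum>A\<in>P. \<Sum>B\<in>P. \<Sum>D\<in>P. w A B D * F2 A B D)
   + (\<Sum>A\<in>P. \<Sum>B\<in>P. \<Sum>D\<in>P. w A B D * F3 A B D)"
  by (simp add: distrib_left sum.distrib)

lemma dl_empty:
  assumes i: "i \<in> {1..k}"
  shows "dl_prob k x {} \<ge> 3 * real (holders k x i) * (real (total_peers k x) - real (holders k x i))^2
            / real (total_peers k x) ^ 3"
proof -
  let ?p = "\<lambda>A. real (pop k x A)"
  let ?I = "\<lambda>A. of_bool (i \<in> A) :: real"
  let ?O = "\<lambda>A. of_bool (i \<notin> A) :: real"
  define F where "F = (\<lambda>A B D. ?I A * ?O B * ?O D + ?O A * ?I B * ?O D + ?O A * ?O B * ?I D)"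
  have "dl_prob k x {} = prob3 k x (\<lambda>A B D. \<exists>i\<in>{1..k}. cnt3 i A B D = 1)"
    by (simp add: dl_prob_def)
  also have "\<dots> \<ge> (\<Sum>A\<in>profiles k. \<Sum>B\<in>profiles k. \<Sum>D\<in>profiles k.
      ?p A * ?p B * ?p D * F A B D) / real (total_peers k x) ^ 3"
    by (rule prob3_lb) (use i in \<open>auto simp: F_def cnt3_def\<close>)
  moreover have "(\<Sum>A\<in>profiles k. \<Sum>B\<in>profiles k. \<Sum>D\<in>profiles k.
      ?p A * ?p B * ?p D * F A B D) = 3 * real (holders k x i) * (real (total_peers k x) - real (holders k x i))^2"
    unfolding F_def sum3_split fact3 using wt_in[of k x i] wt_out[of k x i]
    by (simp add: wt_def power2_eq_square)
  ultimately show ?thesis by simp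
qed

lemma dl_mid:
  assumes "C \<noteq> {}" "card C \<le> k - 2" "i \<notin> C"
  shows "dl_prob k x C \<ge> real (holders k x i) / real (total_peers k x)"
proof -
  have "dl_prob k x C = prob1 k x (\<lambda>A. \<not> A \<subseteq> C)" using assms by (simp add: dl_prob_def)
  also have "\<dots> \<ge> wt k x (\<lambda>A. of_bool (i \<in> A)) / real (total_peers k x)"
    by (rule prob1_lb) (use assms in auto)
  finally show ?thesis by (simp add: wt_in)
qed

lemma dl_top:
  assumes i: "i \<in> {1..k}" and C: "C \<in> profiles k" "i \<notin> C" "C \<noteq> {}" "\<not> card C \<le> k - 2" "card C = k - 1"
  shows "dl_prob k x C \<ge> real (holders k x i) * real (x C)^2 / real (total_peers k x) ^ 3"
proof -
  let ?p = "\<lambda>A. real (pop k x A)"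
  let ?I = "\<lambda>A. of_bool (i \<in> A) :: real"
  let ?J = "\<lambda>A. of_bool (C \<subseteq> A) :: real"
  have "dl_prob k x C = prob3 k x (\<lambda>A B D. (\<exists>j\<in>{1..k} - C. cnt3 j A B D \<ge> 1) \<and> (\<forall>i\<in>C. cnt3 i A B D \<ge> 2))"
    using C by (simp add: dl_prob_def)
  also have "\<dots> \<ge> (\<Sum>A\<in>profiles k. \<Sum>B\<in>profiles k. \<Sum>D\<in>profiles k.
      ?p A * ?p B * ?p D * (?I A * ?J B * ?J D)) / real (total_peers k x) ^ 3"
    by (rule prob3_lb) (use i C in \<open>auto simp: cnt3_def subset_iff\<close>)
  moreover have "(\<Sum>A\<in>profiles k. \<Sum>B\<in>profiles k. \<Sum>D\<in>profiles k.
      ?p A * ?p B * ?p D * (?I A * ?J B * ?J D)) = real (holders k x i) * (wt k x ?J)^2"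
    unfolding fact3 using wt_in[of k x i] by (simp add: wt_def power2_eq_square)
  moreover have "wt k x ?J \<ge> real (x C)"
  proof -
    have "real (x C) \<le> ?p C * ?J C" by (simp add: pop_def)
    also have "\<dots> \<le> wt k x ?J" unfolding wt_def
      by (rule member_le_sum) (use C in auto)
    finally show ?thesis .
  qed
  ultimately have "dl_prob k x C \<ge> real (holders k x i) * (wt k x ?J)^2 / real (total_peers k x) ^ 3"
    by simp
  moreover have "real (holders k x i) * real (x C)^2 \<le> real (holders k x i) * (wt k x ?J)^2"
    by (intro mult_left_mono power_mono) (use \<open>wt k x ?J \<ge> real (x C)\<close> in auto)
  ultimately show ?thesis
    by (smt (verit) divide_right_mono zero_le_power of_nat_0_le_iff)
qed

lemma cube_ineq:
  fixes t a :: real assumes "t \<ge> 0" "a \<ge> 0"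
  shows "t^3 \<ge> 3 * a^2 * t - 2 * a^3"
proof -
  have "0 \<le> (t - a)^2 * (t + 2*a)" using assms by simp
  also have "\<dots> = t^3 - 3 * a^2 * t + 2 * a^3" by (simp add: algebra_simps power2_eq_square power3_eq_cube)
  finally show ?thesis by simp
qed

lemma Nr_eq:
  assumes "i \<in> {1..k}"
  shows "(\<Sum>C\<in>profiles k. if i \<notin> C then real (x C) else 0)
         = real (total_peers k x) - real (holders k x i)"
proof -
  have "(\<Sum>C\<in>profiles k. if i \<notin> C then real (x C) else 0) = wt k x (\<lambda>A. of_bool (i \<notin> A))"
    unfolding wt_def by (rule sum.cong) (use assms in \<open>auto simp: pop_def\<close>)
  then show ?thesis by (simp add: wt_out)
qed

lemma exists_i:
  assumes "k \<ge> 2" "valid_state k x"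
  shows "\<exists>i\<in>{1..k}. (\<Sum>C\<in>profiles k. if i \<notin> C then real (x C) else 0)
             \<ge> (real (total_peers k x) - 1) / real k"
proof (rule ccontr)
  let ?N = "\<lambda>i. (\<Sum>C\<in>profiles k. if i \<notin> C then real (x C) else 0)"
  assume "\<not> ?thesis"
  then have lt: "\<forall>i\<in>{1..k}. ?N i < (real (total_peers k x) - 1) / real k" by auto
  have "sum ?N {1..k} < (\<Sum>i\<in>{1..k}. (real (total_peers k x) - 1) / real k)"
    by (rule sum_strict_mono) (use lt assms in auto)
  also have "\<dots> = real (total_peers k x) - 1" using assms by simp
  also have "\<dots> = (\<Sum>C\<in>profiles k. real (x C))" by (simp add: total_eq)
  also have "\<dots> \<le> (\<Sum>C\<in>profiles k. \<Sum>i\<in>{1..k}. if i \<notin> C then real (x C) else 0)"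
  proof (rule sum_mono)
    fix C assume C: "C \<in> profiles k"
    show "real (x C) \<le> (\<Sum>i\<in>{1..k}. if i \<notin> C then real (x C) else 0)"
    proof (cases "x C = 0")
      case True then show ?thesis by (simp add: sum_nonneg)
    next
      case False
      then have "C \<subseteq> {1..k}" "C \<noteq> {1..k}" using assms(2) by (auto simp: valid_state_def)
      then obtain j where j: "j \<in> {1..k}" "j \<notin> C" by blast
      have "real (x C) = (if j \<notin> C then real (x C) else 0)" using j by simp
      also have "\<dots> \<le> (\<Sum>i\<in>{1..k}. if i \<notin> C then real (x C) else 0)"
        by (rule member_le_sum[where f="\<lambda>i. if i \<notin> C then real (x C) else 0"]) (use j in auto)
      finally show ?thesis .
    qed
  qed
  also have "\<dots> = sum ?N {1..k}" by (rule sum.swap)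
  finally show False by simp
qed

lemma perC:
  assumes k: "k \<ge> 2" and i: "i \<in> {1..k}" and C: "C \<in> profiles k"
    and S: "S = real (total_peers k x)" "S > 0" and H: "H = real (holders k x i)"
    and N: "S - H \<ge> a" and a: "a \<ge> 0" "3 * a^2 \<le> S^2"
  shows "(if i \<notin> C then real (x C) * dl_prob k x C else 0)
     \<ge> H / S * (3 * a^2 / S^2) * (if i \<notin> C then real (x C) else 0)
       - H / S * (if C = {1..k} - {i} then 2 * a^3 / S^2 else 0)"
proof -
  have H0: "H \<ge> 0" using H by simp
  have p0: "H / S \<ge> 0" using H0 S by simp
  have K0: "2 * a^3 / S^2 \<ge> 0" using a by simp
  have c1: "3 * a^2 / S^2 \<le> 1" using a S by simp
  have c0: "3 * a^2 / S^2 \<ge> 0" by simp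
  show ?thesis
  proof (cases "i \<in> C")
    case True
    then have "C \<noteq> {1..k} - {i}" by auto
    then show ?thesis using True p0 K0 by simp
  next
    case iC: False
    have Csub: "C \<subseteq> {1..k} - {i}" using C iC by (auto simp: profiles_def)
    have cardC: "card C \<le> k - 1"
      using card_mono[OF _ Csub] i by simp
    have R: "H / S * (3 * a^2 / S^2) * (if i \<notin> C then real (x C) else 0)
       - H / S * (if C = {1..k} - {i} then 2 * a^3 / S^2 else 0)
       \<le> H / S * (3 * a^2 / S^2) * real (x C)"
    proof -
      have pk: "H / S * (2 * a^3 / S^2) \<ge> 0" by (rule mult_nonneg_nonneg[OF p0 K0])
      show ?thesis
      proof (cases "C = {1..k} - {i}")
        case True
        have e1: "(if i \<notin> C then real (x C) else 0) = real (x C)" using iC by simp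
        have e2: "(if C = {1..k} - {i} then 2 * a^3 / S^2 else 0) = 2 * a^3 / S^2" using True by simp
        show ?thesis unfolding e1 e2 using pk by linarith
      next
        case False
        have e1: "(if i \<notin> C then real (x C) else 0) = real (x C)" using iC by simp
        have e2: "(if C = {1..k} - {i} then 2 * a^3 / S^2 else 0) = 0" using False by simp
        show ?thesis unfolding e1 e2 by simp
      qed
    qed
    consider (e) "C = {}" | (m) "C \<noteq> {}" "card C \<le> k - 2" | (t) "C \<noteq> {}" "\<not> card C \<le> k - 2" "card C = k - 1"
      using cardC by linarith
    then show ?thesis
    proof cases
      case e
      have d: "dl_prob k x C \<ge> 3 * H * (S - H)^2 / S^3" using dl_empty[OF i, of x] e S H by simp
      have "(S-H)^2 \<ge> a^2" using N a by (intro power_mono) auto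
      then have "H / S * (3 * (S - H)^2 / S^2) \<ge> H / S * (3 * a^2 / S^2)"
        using p0 by (intro mult_left_mono divide_right_mono) auto
      moreover have "3 * H * (S - H)^2 / S^3 = H / S * (3 * (S - H)^2 / S^2)"
        using S by (simp add: field_simps power3_eq_cube power2_eq_square)
      ultimately have "3 * H * (S - H)^2 / S^3 \<ge> H / S * (3 * a^2 / S^2)" by simp
      then have "dl_prob k x C \<ge> H / S * (3 * a^2 / S^2)" using d by linarith
      then have "real (x C) * (H / S * (3 * a^2 / S^2)) \<le> real (x C) * dl_prob k x C"
        by (rule mult_left_mono) simp
      then have "real (x C) * dl_prob k x C \<ge> H / S * (3 * a^2 / S^2) * real (x C)"
        by (metis mult.commute)
      then show ?thesis using R iC by simp
    next
      case m
      have d: "dl_prob k x C \<ge> H / S" using dl_mid[OF m iC, of x] S H by simp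
      have "H / S * (3 * a^2 / S^2) \<le> H / S" using mult_left_mono[OF c1 p0] by simp
      then have "dl_prob k x C \<ge> H / S * (3 * a^2 / S^2)" using d by linarith
      then have "real (x C) * (H / S * (3 * a^2 / S^2)) \<le> real (x C) * dl_prob k x C"
        by (rule mult_left_mono) simp
      then have "real (x C) * dl_prob k x C \<ge> H / S * (3 * a^2 / S^2) * real (x C)"
        by (metis mult.commute)
      then show ?thesis using R iC by simp
    next
      case t
      have CT: "C = {1..k} - {i}"
        by (rule card_subset_eq[OF _ Csub]) (use t i in auto)
      have d: "dl_prob k x C \<ge> H * real (x C)^2 / S^3" using dl_top[OF i C iC t, of x] S H by simp
      have s1: "real (x C) * dl_prob k x C \<ge> real (x C) * (H * real (x C)^2 / S^3)"
        using d by (rule mult_left_mono) simp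
      have s2: "real (x C) * (H * real (x C)^2 / S^3) = H / S * (real (x C)^3 / S^2)"
        by (simp add: field_simps power3_eq_cube power2_eq_square)
      have s3: "H / S * (real (x C)^3 / S^2) \<ge> H / S * ((3 * a^2 * real (x C) - 2 * a^3) / S^2)"
        using cube_ineq[of "real (x C)" a] a p0 by (intro mult_left_mono divide_right_mono) auto
      have "real (x C) * dl_prob k x C \<ge> H / S * ((3 * a^2 * real (x C) - 2 * a^3) / S^2)"
        using s1 s2 s3 by linarith
      moreover have "H / S * ((3 * a^2 * real (x C) - 2 * a^3) / S^2)
          = H / S * (3 * a^2 / S^2) * real (x C) - H / S * (2 * a^3 / S^2)"
        using S by (simp add: field_simps)
      ultimately show ?thesis using CT iC by simp
    qed
  qed
qed

lemma final_arith:
  fixes S H k :: real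
  assumes "S \<ge> 12" "H \<ge> 0" "k > 0"
  shows "H / S * ((S - 1) / k)^3 / S^2 \<ge> H / (2 * k^3)"
proof -
  define u where "u = S - 1"
  have u: "u \<ge> 11" using assms u_def by simp
  have h1: "u^2 \<ge> 11 * u" using u by (simp add: power2_eq_square mult_right_mono)
  have h2: "u^3 \<ge> 11 * u^2" using u by (simp add: power3_eq_cube power2_eq_square mult_right_mono)
  have h3: "(u+1)^3 = u^3 + 3*u^2 + 3*u + 1" by (simp add: power3_eq_cube power2_eq_square algebra_simps)
  have "2 * u^3 \<ge> (u+1)^3" unfolding h3 using h1 h2 u by linarith
  then have key: "2 * (S-1)^3 \<ge> S^3" using u_def by simp
  have Sp: "S > 0" using assms by simp
  have "H / S * ((S - 1) / k)^3 / S^2 = H * (2 * (S-1)^3) / (2 * k^3 * S^3)"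
    using Sp assms by (simp add: field_simps power3_eq_cube power2_eq_square)
  also have "\<dots> \<ge> H * S^3 / (2 * k^3 * S^3)"
    using key assms Sp by (intro divide_right_mono mult_left_mono) auto
  also have "H * S^3 / (2 * k^3 * S^3) = H / (2 * k^3)" using Sp by simp
  finally show ?thesis .
qed

theorem lemma2:
  fixes k :: nat and lam :: real and x :: "nat set \<Rightarrow> nat"
  assumes "k \<ge> 2" and "lam > 0"
    and "valid_state k x"
    and "total_peers k x \<ge> 12"
  shows "dl_rate k x \<ge> (MIN i\<in>{1..k}. real (holders k x i) / (2 * real k ^ 3))"
proof -
  obtain i where i: "i \<in> {1..k}" and Ni: "(\<Sum>C\<in>profiles k. if i \<notin> C then real (x C) else 0)
             \<ge> (real (total_peers k x) - 1) / real k"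
    using exists_i[OF assms(1) assms(3)] by blast
  define S where "S = real (total_peers k x)"
  define H where "H = real (holders k x i)"
  define a where "a = (S - 1) / real k"
  define T where "T = {1..k} - {i}"
  have S12: "S \<ge> 12" using assms(4) S_def by simp
  have Sp: "S > 0" using S12 by simp
  have kp: "real k > 0" using assms(1) by simp
  have N: "S - H \<ge> a" using Ni Nr_eq[OF i, of x] S_def H_def a_def by simp
  have a0: "a \<ge> 0" using S12 kp a_def by simp
  have aS: "a \<le> S / 2"
  proof -
    have "a \<le> (S - 1) / 2" unfolding a_def using assms(1) S12
      by (intro divide_left_mono) auto
    then show ?thesis by simp
  qed
  have a3: "3 * a^2 \<le> S^2"
  proof -
    have "a^2 \<le> (S/2)^2" using a0 aS by (intro power_mono) auto
    then have "4 * a^2 \<le> S^2" by (simp add: power2_eq_square)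
    then show ?thesis using zero_le_power2[of a] by linarith
  qed
  define c where "c = 3 * a^2 / S^2"
  define K where "K = 2 * a^3 / S^2"
  have "dl_rate k x \<ge> (\<Sum>C\<in>profiles k. if i \<notin> C then real (x C) * dl_prob k x C else 0)"
    unfolding dl_rate_def by (intro sum_mono) (simp add: dl_nn)
  moreover have "(\<Sum>C\<in>profiles k. if i \<notin> C then real (x C) * dl_prob k x C else 0)
     \<ge> (\<Sum>C\<in>profiles k. H / S * c * (if i \<notin> C then real (x C) else 0)
           - H / S * (if C = T then K else 0))"
    unfolding c_def K_def T_def
    by (intro sum_mono perC[OF assms(1) i _ S_def Sp H_def N a0 a3])
  moreover have "(\<Sum>C\<in>profiles k. H / S * c * (if i \<notin> C then real (x C) else 0)
           - H / S * (if C = T then K else 0))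
     = H / S * c * (S - H) - H / S * K"
  proof -
    have Tp: "T \<in> profiles k" unfolding T_def profiles_def by auto
    have "(\<Sum>C\<in>profiles k. H / S * (if C = T then K else 0)) = H / S * K"
      using Tp by (simp only: sum_distrib_left[symmetric] sum.delta fin_prof if_True)
    moreover have "(\<Sum>C\<in>profiles k. H / S * c * (if i \<notin> C then real (x C) else 0))
        = H / S * c * (S - H)"
      using Nr_eq[OF i, of x] S_def H_def by (simp only: sum_distrib_left[symmetric])
    ultimately show ?thesis by (simp only: sum_subtractf)
  qed
  moreover have "H / S * c * (S - H) \<ge> H / S * c * a"
    using N H_def Sp unfolding c_def by (intro mult_left_mono) auto
  moreover have "H / S * c * a - H / S * K = H / S * a^3 / S^2"
    unfolding c_def K_def by (simp add: field_simps power3_eq_cube power2_eq_square)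
  moreover have "H / S * a^3 / S^2 \<ge> H / (2 * real k ^ 3)"
    unfolding a_def using final_arith[OF S12 _ kp, of H] H_def by simp
  ultimately have r: "dl_rate k x \<ge> H / (2 * real k ^ 3)" by linarith
  have "(MIN i\<in>{1..k}. real (holders k x i) / (2 * real k ^ 3)) \<le> H / (2 * real k ^ 3)"
    unfolding H_def by (rule Min_le) (use i in auto)
  then show ?thesis using r by linarith
qed

end
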